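(* Let $G=(V,E,c_V,c_E)$ be a capacitated graph such that, in the execution of Rising-Tide on $G$, no two vertices become saturated simultaneously, and let $\mu$ be the output of Rising-Tide on $G$ and $D_G$ its dependency graph. Then: (1) for any two edges $e_1,e_2\in E$, if $e_1$ is removed from the working set $E'$ before $e_2$, then $\mu(e_1)<\mu(e_2)$; (2) for each $u\in V$, all edges directed towards $u$ in $D_G$ have the same $\mu$-value; (3) for any edge $u\to v$ of $D_G$ and any edge $(v,w)\in E$, $\mu(u,v)\ge\mu(v,w)$; (4) for any walk $u_0\to u_1\to u_2\to\cdots$ in $D_G$, $\mu(u_0,u_1)\ge\mu(u_1,u_2)\ge\cdots$; (5) $D_G$ is a directed acyclic graph.
   Context: Capacitated graphs have nonnegative vertex capacities $c_V$ and edge capacities $c_E$; edges may include self-loops, and in $\sum_j\mu(i,j)$ a self-loop at $i$ counts once. A feasible fractional matching $\mu:E\to\mathbb{R}_{\ge0}$ satisfies $\mu(e)\le c_E(e)$ and $\sum_j\mu(i,j)\le c_V(i)$. Vertex $i$ is saturated if $\sum_j\mu(i,j)=c_V(i)$; edge $e$ is saturated if $\mu(e)=c_E(e)$. Rising-Tide: set $E'=\{e\in E:c_E(e)>0\}$ and $\mu\equiv0$; while $E'\ne\emptyset$: choose the maximum $\delta\ge0$ such that $\mu+\delta\mathbf{1}_{E'}$ is feasible, set $\mu\gets\mu+\delta\mathbf{1}_{E'}$, and remove from $E'$ every edge $(i,j)$ such that $i$, $j$, or $(i,j)$ is saturated; return $\mu$. Dependency graph $D_G$: the directed graph on vertex set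 $V$ which, for each edge $(i,j)\in E$, contains the directed edge $j\to i$ if $i$ is saturated at the moment $(i,j)$ is removed from $E'$, and contains $i\to j$ if $j$ is saturated at that moment (possibly both). *)

theory Defs
  imports Complex_Main
begin

text \<open>An (undirected) edge (i,j)
  is represented by the set {i,j}; a self-loop (i,i) is the singleton {i}.\<close>

definition is_cgraph :: "'v set \<Rightarrow> 'v set set \<Rightarrow> ('v \<Rightarrow> real) \<Rightarrow> ('v set \<Rightarrow> real) \<Rightarrow> bool" where
  "is_cgraph V E cV cE \<longleftrightarrow> finite V \<and>
     (\<forall>e\<in>E. e \<subseteq> V \<and> (card e = 1 \<or> card e = 2)) \<and>
     (\<forall>i\<in>V. 0 \<le> cV i) \<and> (\<forall>e\<in>E. 0 \<le> cE e)"

text \<open>sum_j mu(i,j): each edge containing i counted once (so a self-loop counts once).\<close>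
definition vload :: "'v set set \<Rightarrow> ('v set \<Rightarrow> real) \<Rightarrow> 'v \<Rightarrow> real" where
  "vload E \<mu> i = (\<Sum>e\<in>{e\<in>E. i \<in> e}. \<mu> e)"

definition feasible :: "'v set \<Rightarrow> 'v set set \<Rightarrow> ('v \<Rightarrow> real) \<Rightarrow> ('v set \<Rightarrow> real) \<Rightarrow> ('v set \<Rightarrow> real) \<Rightarrow> bool" where
  "feasible V E cV cE \<mu> \<longleftrightarrow> (\<forall>e\<in>E. 0 \<le> \<mu> e \<and> \<mu> e \<le> cE e) \<and> (\<forall>i\<in>V. vload E \<mu> i \<le> cV i)"

definition vsat :: "'v set set \<Rightarrow> ('v \<Rightarrow> real) \<Rightarrow> ('v set \<Rightarrow> real) \<Rightarrow> 'v \<Rightarrow> bool" where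
  "vsat E cV \<mu> i \<longleftrightarrow> vload E \<mu> i = cV i"

definition esat :: "('v set \<Rightarrow> real) \<Rightarrow> ('v set \<Rightarrow> real) \<Rightarrow> 'v set \<Rightarrow> bool" where
  "esat cE \<mu> e \<longleftrightarrow> \<mu> e = cE e"

definition raise :: "('v set \<Rightarrow> real) \<Rightarrow> 'v set set \<Rightarrow> real \<Rightarrow> ('v set \<Rightarrow> real)" where
  "raise \<mu> E' \<delta> = (\<lambda>e. \<mu> e + (if e \<in> E' then \<delta> else 0))"

definition rt_delta :: "'v set \<Rightarrow> 'v set set \<Rightarrow> ('v \<Rightarrow> real) \<Rightarrow> ('v set \<Rightarrow> real) \<Rightarrow> 'v set set \<Rightarrow> ('v set \<Rightarrow> real) \<Rightarrow> real" where
  "rt_delta V E cV cE E' \<mu> = (GREATEST \<delta>. 0 \<le> \<delta> \<and> feasible V E cV cE (raise \<mu> E' \<delta>))"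

definition rt_step :: "'v set \<Rightarrow> 'v set set \<Rightarrow> ('v \<Rightarrow> real) \<Rightarrow> ('v set \<Rightarrow> real) \<Rightarrow>
    'v set set \<times> ('v set \<Rightarrow> real) \<Rightarrow> 'v set set \<times> ('v set \<Rightarrow> real)" where
  "rt_step V E cV cE s = (case s of (E', \<mu>) \<Rightarrow>
     if E' = {} then s else
       (let \<mu>' = raise \<mu> E' (rt_delta V E cV cE E' \<mu>) in
        ({e \<in> E'. \<not> (\<exists>i\<in>e. vsat E cV \<mu>' i) \<and> \<not> esat cE \<mu>' e}, \<mu>')))"

definition rt_state :: "'v set \<Rightarrow> 'v set set \<Rightarrow> ('v \<Rightarrow> real) \<Rightarrow> ('v set \<Rightarrow> real) \<Rightarrow> nat \<Rightarrow>
    'v set set \<times> ('v set \<Rightarrow> real)" where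
  "rt_state V E cV cE k = (rt_step V E cV cE ^^ k) ({e\<in>E. 0 < cE e}, (\<lambda>_. 0))"

definition rt_mu :: "'v set \<Rightarrow> 'v set set \<Rightarrow> ('v \<Rightarrow> real) \<Rightarrow> ('v set \<Rightarrow> real) \<Rightarrow> nat \<Rightarrow> 'v set \<Rightarrow> real" where
  "rt_mu V E cV cE k = snd (rt_state V E cV cE k)"

definition rt_work :: "'v set \<Rightarrow> 'v set set \<Rightarrow> ('v \<Rightarrow> real) \<Rightarrow> ('v set \<Rightarrow> real) \<Rightarrow> nat \<Rightarrow> 'v set set" where
  "rt_work V E cV cE k = fst (rt_state V E cV cE k)"

definition rising_tide :: "'v set \<Rightarrow> 'v set set \<Rightarrow> ('v \<Rightarrow> real) \<Rightarrow> ('v set \<Rightarrow> real) \<Rightarrow> 'v set \<Rightarrow> real" where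
  "rising_tide V E cV cE = rt_mu V E cV cE (LEAST k. rt_work V E cV cE k = {})"

definition removed_at :: "'v set \<Rightarrow> 'v set set \<Rightarrow> ('v \<Rightarrow> real) \<Rightarrow> ('v set \<Rightarrow> real) \<Rightarrow> 'v set \<Rightarrow> nat \<Rightarrow> bool" where
  "removed_at V E cV cE e k \<longleftrightarrow> e \<in> rt_work V E cV cE k \<and> e \<notin> rt_work V E cV cE (Suc k)"

text \<open>Dependency graph: for an edge (i,j) removed in iteration k, j -> i if i is saturated
  at that moment (i.e. w.r.t. mu after the increase of iteration k).\<close>
definition dep_graph :: "'v set \<Rightarrow> 'v set set \<Rightarrow> ('v \<Rightarrow> real) \<Rightarrow> ('v set \<Rightarrow> real) \<Rightarrow> ('v \<times> 'v) set" where
  "dep_graph V E cV cE = {(j, i). i \<in> V \<and> j \<in> V \<and> {i, j} \<in> E \<and>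
      (\<exists>k. removed_at V E cV cE {i, j} k \<and> vsat E cV (rt_mu V E cV cE (Suc k)) i)}"

text \<open>Vertex i becomes saturated at time t: t = 0 means saturated by the initial mu = 0;
  t = k+1 means it became saturated during iteration k.\<close>
definition becomes_sat :: "'v set \<Rightarrow> 'v set set \<Rightarrow> ('v \<Rightarrow> real) \<Rightarrow> ('v set \<Rightarrow> real) \<Rightarrow> 'v \<Rightarrow> nat \<Rightarrow> bool" where
  "becomes_sat V E cV cE i t \<longleftrightarrow> vsat E cV (rt_mu V E cV cE t) i \<and>
      (t = 0 \<or> \<not> vsat E cV (rt_mu V E cV cE (t - 1)) i)"

definition no_simultaneous_saturation :: "'v set \<Rightarrow> 'v set set \<Rightarrow> ('v \<Rightarrow> real) \<Rightarrow> ('v set \<Rightarrow> real) \<Rightarrow> bool" where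
  "no_simultaneous_saturation V E cV cE \<longleftrightarrow>
     (\<forall>t. \<forall>i\<in>V. \<forall>j\<in>V. becomes_sat V E cV cE i t \<and> becomes_sat V E cV cE j t \<longrightarrow> i = j)"

end

theory Submission
  imports Defs
begin

locale rtl =
  fixes V :: "'v set" and E :: "'v set set" and cV :: "'v \<Rightarrow> real" and cE :: "'v set \<Rightarrow> real"
  assumes G: "is_cgraph V E cV cE"
begin

lemma finV: "finite V" using G by (simp add: is_cgraph_def)
lemma EsubV: "e \<in> E \<Longrightarrow> e \<subseteq> V" using G by (simp add: is_cgraph_def)
lemma finE: "finite E"
proof -
  have "E \<subseteq> Pow V" using EsubV by blast
  thus ?thesis using finV by (meson finite_Pow_iff finite_subset)
qed

abbreviation W where "W k \<equiv> rt_work V E cV cE k"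
abbreviation m where "m k \<equiv> rt_mu V E cV cE k"
abbreviation dl where "dl k \<equiv> rt_delta V E cV cE (W k) (m k)"

lemma state_Suc: "rt_state V E cV cE (Suc k) = rt_step V E cV cE (rt_state V E cV cE k)"
  by (simp add: rt_state_def)

lemma step_ne:
  assumes "W k \<noteq> {}"
  shows "m (Suc k) = raise (m k) (W k) (dl k)"
    and "W (Suc k) = {e\<in>W k. \<not>(\<exists>i\<in>e. vsat E cV (m (Suc k)) i) \<and> \<not> esat cE (m (Suc k)) e}"
  using assms unfolding rt_work_def rt_mu_def state_Suc rt_step_def
  by (cases "rt_state V E cV cE k"; simp add: Let_def)+

lemma step_e:
  assumes "W k = {}"
  shows "m (Suc k) = m k" and "W (Suc k) = {}"
  using assms unfolding rt_work_def rt_mu_def state_Suc rt_step_def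
  by (cases "rt_state V E cV cE k"; simp)+

lemma W_Suc_sub: "W (Suc k) \<subseteq> W k"
  by (cases "W k = {}") (auto simp: step_e step_ne(2)[of k])

lemma W0: "W 0 = {e\<in>E. 0 < cE e}" by (simp add: rt_work_def rt_state_def)
lemma m0: "m 0 = (\<lambda>_. 0)" by (simp add: rt_mu_def rt_state_def)

lemma vload_raise:
  assumes "W' \<subseteq> E"
  shows "vload E (raise \<mu> W' \<delta>) i = vload E \<mu> i + \<delta> * real (card {e\<in>E. i \<in> e \<and> e \<in> W'})"
proof -
  have "vload E (raise \<mu> W' \<delta>) i = vload E \<mu> i + (\<Sum>e\<in>{e\<in>E. i \<in> e}. (if e \<in> W' then \<delta> else 0))"
    unfolding vload_def raise_def by (simp add: sum.distrib)
  also have "(\<Sum>e\<in>{e\<in>E. i \<in> e}. (if e \<in> W' then \<delta> else 0)) = (\<Sum>e\<in>{e\<in>{e\<in>E. i \<in> e}. e \<in> W'}. \<delta>)"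
    by (rule sum.inter_filter[symmetric]) (use finE in simp)
  also have "{e\<in>{e\<in>E. i \<in> e}. e \<in> W'} = {e\<in>E. i \<in> e \<and> e \<in> W'}" by auto
  finally show ?thesis by simp
qed

lemma delta_props:
  assumes feas: "feasible V E cV cE \<mu>" and sub: "W' \<subseteq> E" and ne: "W' \<noteq> {}"
  defines "d \<equiv> rt_delta V E cV cE W' \<mu>"
  shows "0 \<le> d" "feasible V E cV cE (raise \<mu> W' d)"
    "\<exists>e\<in>W'. esat cE (raise \<mu> W' d) e \<or> (\<exists>i\<in>e. vsat E cV (raise \<mu> W' d) i)"
    "(\<forall>e\<in>W'. \<mu> e < cE e \<and> (\<forall>i\<in>e. vload E \<mu> i < cV i)) \<Longrightarrow> 0 < d"
proof -
  define n where "n i = card {e\<in>E. i \<in> e \<and> e \<in> W'}" for i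
  define B where "B = (\<lambda>e. cE e - \<mu> e) ` W' \<union> (\<lambda>i. (cV i - vload E \<mu> i) / real (n i)) ` {i\<in>V. n i > 0}"
  have fW: "finite W'" using finite_subset[OF sub finE] .
  have fV: "finite {i\<in>V. n i > 0}" using finV by simp
  have finB: "finite B" unfolding B_def using fW fV by simp
  have neB: "B \<noteq> {}" unfolding B_def using ne by auto
  have vr: "vload E (raise \<mu> W' x) i = vload E \<mu> i + x * real (n i)" for x i
    using vload_raise[OF sub] n_def by simp
  have Bnn: "\<forall>b\<in>B. 0 \<le> b" using feas unfolding B_def feasible_def using sub by auto
  define P where "P x = (0 \<le> x \<and> feasible V E cV cE (raise \<mu> W' x))" for x
  have ub: "y \<le> Min B" if "P y" for y
  proof -
    have "\<forall>b\<in>B. y \<le> b"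
    proof
      fix b assume "b \<in> B"
      then consider (a) e where "e \<in> W'" "b = cE e - \<mu> e" | (b) i where "i \<in> V" "n i > 0" "b = (cV i - vload E \<mu> i) / real (n i)"
        unfolding B_def by auto
      then show "y \<le> b"
      proof cases
        case a
        then show ?thesis using that sub unfolding P_def feasible_def raise_def by force
      next
        case b
        then have "vload E \<mu> i + y * real (n i) \<le> cV i" using that vr unfolding P_def feasible_def by metis
        then have "y * real (n i) \<le> cV i - vload E \<mu> i" by linarith
        then show ?thesis using b by (simp add: pos_le_divide_eq)
      qed
    qed
    thus ?thesis using finB neB by simp
  qed
  have PM: "P (Min B)"
  proof -
    have M0: "0 \<le> Min B" using finB neB Bnn by simp
    have "\<forall>e\<in>E. 0 \<le> raise \<mu> W' (Min B) e \<and> raise \<mu> W' (Min B) e \<le> cE e"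
    proof
      fix e assume "e \<in> E"
      show "0 \<le> raise \<mu> W' (Min B) e \<and> raise \<mu> W' (Min B) e \<le> cE e"
      proof (cases "e \<in> W'")
        case True
        then have "Min B \<le> cE e - \<mu> e" using finB unfolding B_def by simp
        then show ?thesis using True M0 feas \<open>e \<in> E\<close> unfolding raise_def feasible_def by auto
      next
        case False
        then show ?thesis using feas \<open>e \<in> E\<close> unfolding raise_def feasible_def by auto
      qed
    qed
    moreover have "\<forall>i\<in>V. vload E (raise \<mu> W' (Min B)) i \<le> cV i"
    proof
      fix i assume "i \<in> V"
      show "vload E (raise \<mu> W' (Min B)) i \<le> cV i"
      proof (cases "n i > 0")
        case True
        then have "Min B \<le> (cV i - vload E \<mu> i) / real (n i)" using finB \<open>i \<in> V\<close> unfolding B_def by simp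
        then have "Min B * real (n i) \<le> cV i - vload E \<mu> i" using True by (simp add: field_simps)
        then show ?thesis using vr by simp
      next
        case False
        then show ?thesis using vr feas \<open>i \<in> V\<close> unfolding feasible_def by simp
      qed
    qed
    ultimately show ?thesis unfolding P_def feasible_def using M0 by blast
  qed
  have dM: "d = Min B" unfolding d_def rt_delta_def
    using PM ub unfolding P_def by (intro Greatest_equality) auto
  show "0 \<le> d" "feasible V E cV cE (raise \<mu> W' d)" using PM dM unfolding P_def by auto
  show "\<exists>e\<in>W'. esat cE (raise \<mu> W' d) e \<or> (\<exists>i\<in>e. vsat E cV (raise \<mu> W' d) i)"
  proof -
    have "Min B \<in> B" using finB neB by simp
    then consider (a) e where "e \<in> W'" "Min B = cE e - \<mu> e" | (b) i where "i \<in> V" "n i > 0" "Min B = (cV i - vload E \<mu> i) / real (n i)"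
      unfolding B_def by auto
    then show ?thesis
    proof cases
      case a
      then have "esat cE (raise \<mu> W' d) e" unfolding dM esat_def raise_def by simp
      then show ?thesis using a(1) by blast
    next
      case b
      then have "vload E (raise \<mu> W' d) i = cV i" using vr dM by (simp add: field_simps)
      moreover from b have "{e\<in>E. i \<in> e \<and> e \<in> W'} \<noteq> {}" unfolding n_def by (metis card.empty less_irrefl)
      ultimately show ?thesis unfolding vsat_def by blast
    qed
  qed
  assume str: "\<forall>e\<in>W'. \<mu> e < cE e \<and> (\<forall>i\<in>e. vload E \<mu> i < cV i)"
  have "\<forall>b\<in>B. 0 < b"
  proof
    fix b assume "b \<in> B"
    then consider (a) e where "e \<in> W'" "b = cE e - \<mu> e" | (b) i where "i \<in> V" "n i > 0" "b = (cV i - vload E \<mu> i) / real (n i)"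
      unfolding B_def by auto
    then show "0 < b"
    proof cases
      case a then show ?thesis using str by auto
    next
      case b
      from b have "{e\<in>E. i \<in> e \<and> e \<in> W'} \<noteq> {}" unfolding n_def by (metis card.empty less_irrefl)
      then have "vload E \<mu> i < cV i" using str by blast
      then show ?thesis using b by simp
    qed
  qed
  then show "0 < d" using dM finB neB by simp
qed


lemma inv: "feasible V E cV cE (m k) \<and> W k \<subseteq> E \<and> (\<forall>e\<in>W k. \<forall>e'. m k e' \<le> m k e)"
proof (induction k)
  case 0
  have "feasible V E cV cE (\<lambda>_. 0)" using G unfolding feasible_def is_cgraph_def vload_def by simp
  then show ?case by (auto simp: W0 m0)
next
  case (Suc k)
  show ?case
  proof (cases "W k = {}")
    case True
    then show ?thesis using Suc step_e[OF True] by simp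
  next
    case False
    have d0: "0 \<le> dl k" and fe: "feasible V E cV cE (raise (m k) (W k) (dl k))"
      using delta_props[of "m k" "W k"] Suc False by auto
    have ms: "m (Suc k) = raise (m k) (W k) (dl k)" using step_ne(1)[OF False] .
    have sub: "W (Suc k) \<subseteq> W k" by (rule W_Suc_sub)
    have "\<forall>e\<in>W (Suc k). \<forall>e'. m (Suc k) e' \<le> m (Suc k) e"
    proof (intro ballI allI)
      fix e e' assume "e \<in> W (Suc k)"
      then have e: "e \<in> W k" using sub by blast
      then have "m k e' \<le> m k e" using Suc by blast
      then show "m (Suc k) e' \<le> m (Suc k) e" unfolding ms raise_def using e d0 by auto
    qed
    moreover have "feasible V E cV cE (m (Suc k))" unfolding ms by (rule fe)
    moreover have "W (Suc k) \<subseteq> E" using sub Suc by blast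
    ultimately show ?thesis by blast
  qed
qed

lemma feas: "feasible V E cV cE (m k)" using inv by blast
lemma WsubE: "W k \<subseteq> E" using inv by blast

lemma dl_nonneg: "W k \<noteq> {} \<Longrightarrow> 0 \<le> dl k"
  using delta_props(1)[OF feas WsubE] by blast

lemma mono_step: "m k e \<le> m (Suc k) e"
  by (cases "W k = {}") (auto simp: step_e step_ne raise_def dl_nonneg)

lemma mono: "k \<le> k' \<Longrightarrow> m k e \<le> m k' e"
  by (rule lift_Suc_mono_le[of "\<lambda>t. m t e"]) (auto simp: mono_step)

lemma W_anti: "k \<le> k' \<Longrightarrow> W k' \<subseteq> W k"
proof (induction k' rule: dec_induct)
  case base then show ?case by simp
next
  case (step n) then show ?case using W_Suc_sub[of n] by blast
qed

lemma frozen_step: "e \<notin> W k \<Longrightarrow> m (Suc k) e = m k e"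
  by (cases "W k = {}") (auto simp: step_e step_ne raise_def)

lemma frozen: assumes "e \<notin> W k" "k \<le> k'" shows "m k' e = m k e"
  using assms(2)
proof (induction k' rule: dec_induct)
  case base then show ?case by simp
next
  case (step n)
  then have "e \<notin> W n" using W_anti[of k n] assms(1) by blast
  then show ?case using step frozen_step by simp
qed

lemma step_max: "e \<in> W k \<Longrightarrow> m (Suc k) e' \<le> m (Suc k) e"
proof -
  assume e: "e \<in> W k"
  then have ne: "W k \<noteq> {}" by blast
  have "m k e' \<le> m k e" using inv e by blast
  then show ?thesis using step_ne(1)[OF ne] e dl_nonneg[OF ne] unfolding raise_def by auto
qed

lemma sat_filter: "e \<in> W k \<Longrightarrow> 0 < k \<Longrightarrow> i \<in> e \<Longrightarrow> \<not> vsat E cV (m k) i"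
proof -
  assume e: "e \<in> W k" and k: "0 < k" and i: "i \<in> e"
  then obtain j where j: "k = Suc j" using gr0_implies_Suc by blast
  have "W j \<noteq> {}" using e W_Suc_sub[of j] j by blast
  then show ?thesis using step_ne(2)[of j] e i j by auto
qed

lemma strict_pos: "W k \<noteq> {} \<Longrightarrow> 0 < k \<Longrightarrow> 0 < dl k"
proof -
  assume ne: "W k \<noteq> {}" and k: "0 < k"
  then obtain j where j: "k = Suc j" using gr0_implies_Suc by blast
  have nej: "W j \<noteq> {}" using ne W_Suc_sub[of j] j by blast
  have "\<forall>e\<in>W k. m k e < cE e \<and> (\<forall>i\<in>e. vload E (m k) i < cV i)"
  proof
    fix e assume e: "e \<in> W k"
    have eE: "e \<in> E" using e WsubE by blast
    have "\<not> esat cE (m k) e" using step_ne(2)[OF nej] e j by auto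
    moreover have "m k e \<le> cE e" using feas[of k] eE unfolding feasible_def by blast
    moreover have "\<forall>i\<in>e. vload E (m k) i < cV i"
    proof
      fix i assume i: "i \<in> e"
      then have "i \<in> V" using EsubV eE by blast
      then have "vload E (m k) i \<le> cV i" using feas[of k] unfolding feasible_def by blast
      moreover have "\<not> vsat E cV (m k) i" using sat_filter e k i by blast
      ultimately show "vload E (m k) i < cV i" unfolding vsat_def by simp
    qed
    ultimately show "m k e < cE e \<and> (\<forall>i\<in>e. vload E (m k) i < cV i)" unfolding esat_def by simp
  qed
  then show ?thesis using delta_props(4)[OF feas WsubE ne] by blast
qed

lemma W_shrink: "W k \<noteq> {} \<Longrightarrow> W (Suc k) \<subset> W k"
proof -
  assume ne: "W k \<noteq> {}"
  have "\<exists>e\<in>W k. esat cE (m (Suc k)) e \<or> (\<exists>i\<in>e. vsat E cV (m (Suc k)) i)"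
    unfolding step_ne(1)[OF ne] by (rule delta_props(3)[OF feas WsubE ne])
  then obtain e where "e \<in> W k" "esat cE (m (Suc k)) e \<or> (\<exists>i\<in>e. vsat E cV (m (Suc k)) i)"
    by blast
  then have "e \<notin> W (Suc k)" using step_ne(2)[OF ne] by auto
  then show ?thesis using W_Suc_sub \<open>e \<in> W k\<close> by blast
qed

lemma terminates: "\<exists>k. W k = {}"
proof -
  have c: "W k \<noteq> {} \<Longrightarrow> card (W k) + k \<le> card (W 0)" for k
  proof (induction k)
    case 0 then show ?case by simp
  next
    case (Suc k)
    then have ne: "W k \<noteq> {}" using W_Suc_sub by blast
    have "card (W (Suc k)) < card (W k)"
      using W_shrink[OF ne] finite_subset[OF WsubE finE] by (simp add: psubset_card_mono)
    then show ?case using Suc ne by simp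
  qed
  show ?thesis
  proof (rule ccontr)
    assume "\<nexists>k. W k = {}"
    then have ne: "W (card (W 0)) \<noteq> {}" by blast
    then have "card (W (card (W 0))) = 0" using c by fastforce
    then show False using ne finite_subset[OF WsubE finE] by simp
  qed
qed

definition K where "K = (LEAST k. W k = {})"

lemma WK: "W K = {}" unfolding K_def by (rule LeastI_ex[OF terminates])

lemma ltK: "W k \<noteq> {} \<Longrightarrow> k < K"
  using W_anti[of K k] WK by (metis not_less subset_empty)

lemma mK: "K \<le> t \<Longrightarrow> m t = m K"
proof (induction t rule: dec_induct)
  case base then show ?case by simp
next
  case (step n)
  have "W n = {}" using W_anti[OF step(1)] WK by blast
  then show ?case using step step_e by simp
qed

lemma final_removed: "removed_at V E cV cE e k \<Longrightarrow> m K e = m (Suc k) e"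
proof -
  assume r: "removed_at V E cV cE e k"
  then have "e \<in> W k" "e \<notin> W (Suc k)" unfolding removed_at_def by auto
  then have "Suc k \<le> K" using ltK by fastforce
  then show ?thesis using frozen \<open>e \<notin> W (Suc k)\<close> by blast
qed

lemma sat_mono: "i \<in> V \<Longrightarrow> vsat E cV (m t) i \<Longrightarrow> t \<le> t' \<Longrightarrow> vsat E cV (m t') i"
proof -
  assume i: "i \<in> V" and s: "vsat E cV (m t) i" and tt: "t \<le> t'"
  have "vload E (m t) i \<le> vload E (m t') i" unfolding vload_def
    by (rule sum_mono) (use mono[OF tt] in auto)
  moreover have "vload E (m t') i \<le> cV i" using feas[of t'] i unfolding feasible_def by blast
  ultimately show ?thesis using s unfolding vsat_def by simp
qed

lemma zero_delta: "e \<in> W k \<Longrightarrow> i \<in> e \<Longrightarrow> vsat E cV (m k) i \<Longrightarrow> m (Suc k) = m k"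
proof -
  assume e: "e \<in> W k" and i: "i \<in> e" and s: "vsat E cV (m k) i"
  then have ne: "W k \<noteq> {}" by blast
  have eE: "e \<in> E" using e WsubE by blast
  have iV: "i \<in> V" using EsubV eE i by blast
  define n where "n = card {e\<in>E. i \<in> e \<and> e \<in> W k}"
  have "e \<in> {e\<in>E. i \<in> e \<and> e \<in> W k}" using eE i e by blast
  moreover have "finite {e\<in>E. i \<in> e \<and> e \<in> W k}" using finE by simp
  ultimately have n0: "0 < n" unfolding n_def by (auto simp: card_gt_0_iff)
  have d0: "0 \<le> dl k" using dl_nonneg[OF ne] .
  have "vload E (raise (m k) (W k) (dl k)) i \<le> cV i"
    using delta_props(2)[OF feas WsubE ne] iV unfolding feasible_def by blast
  then have "vload E (m k) i + dl k * real n \<le> cV i" using vload_raise[OF WsubE] n_def by simp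
  then have "dl k * real n \<le> 0" using s unfolding vsat_def by simp
  then have "dl k = 0" using d0 n0 by (simp add: mult_le_0_iff)
  then show ?thesis using step_ne(1)[OF ne] unfolding raise_def by auto
qed

lemma part1: "removed_at V E cV cE e1 k1 \<Longrightarrow> removed_at V E cV cE e2 k2 \<Longrightarrow> k1 < k2 \<Longrightarrow> m K e1 < m K e2"
proof -
  assume r1: "removed_at V E cV cE e1 k1" and r2: "removed_at V E cV cE e2 k2" and lt: "k1 < k2"
  have e2: "e2 \<in> W k2" using r2 unfolding removed_at_def by blast
  then have e2': "e2 \<in> W (Suc k1)" using W_anti[of "Suc k1" k2] lt by auto
  have "m (Suc k1) e1 \<le> m (Suc k1) e2" using inv e2' by blast
  also have "\<dots> \<le> m k2 e2" using mono lt by simp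
  also have "\<dots> < m (Suc k2) e2"
  proof -
    have ne2: "W k2 \<noteq> {}" using e2 by blast
    have "0 < dl k2" using strict_pos[OF ne2] lt by simp
    then show ?thesis using step_ne(1)[OF ne2] e2 unfolding raise_def by simp
  qed
  finally show ?thesis using final_removed r1 r2 by simp
qed

lemma Dedge: "(a, b) \<in> dep_graph V E cV cE \<Longrightarrow> {a, b} \<in> E"
  unfolding dep_graph_def by (auto simp: insert_commute)

lemma part3: "(u, v) \<in> dep_graph V E cV cE \<Longrightarrow> {v, w} \<in> E \<Longrightarrow> m K {v, w} \<le> m K {u, v}"
proof -
  assume D: "(u, v) \<in> dep_graph V E cV cE" and vw: "{v, w} \<in> E"
  then obtain k where r: "removed_at V E cV cE {v, u} k" and sv: "vsat E cV (m (Suc k)) v"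
    unfolding dep_graph_def by auto
  have e: "{v, u} \<in> W k" using r unfolding removed_at_def by blast
  then have ne: "W k \<noteq> {}" by blast
  have "{v, w} \<notin> W (Suc k)" using step_ne(2)[OF ne] sv by auto
  moreover have "Suc k \<le> K" using ltK[OF ne] by simp
  ultimately have "m K {v, w} = m (Suc k) {v, w}" using frozen by blast
  also have "\<dots> \<le> m (Suc k) {v, u}" using step_max[OF e] .
  also have "\<dots> = m K {v, u}" using final_removed[OF r] by simp
  finally show ?thesis by (simp add: insert_commute)
qed

lemma part5:
  assumes nosim: "no_simultaneous_saturation V E cV cE"
  shows "acyclic (dep_graph V E cV cE - Id)"
proof -
  define s where "s x = (if \<exists>t. vsat E cV (m t) x then LEAST t. vsat E cV (m t) x else Suc K)" for x
  have sK: "s x \<le> K" if ex: "\<exists>t. vsat E cV (m t) x" for x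
  proof -
    obtain t where t: "vsat E cV (m t) x" using ex by blast
    have "vsat E cV (m (min t K)) x"
      using t mK[of t] by (cases "t \<le> K") (auto simp: min_def)
    then have "(LEAST t. vsat E cV (m t) x) \<le> min t K" by (rule Least_le)
    then show ?thesis unfolding s_def using ex by simp
  qed
  have sv: "vsat E cV (m (s x)) x" if ex: "\<exists>t. vsat E cV (m t) x" for x
  proof -
    have "vsat E cV (m (LEAST t. vsat E cV (m t) x)) x" using ex by (rule LeastI_ex)
    then show ?thesis unfolding s_def using ex by simp
  qed
  have sle: "s x \<le> t" if "vsat E cV (m t) x" for x t
    unfolding s_def using that by (auto intro: Least_le)
  have sb: "becomes_sat V E cV cE x (s x)" if "\<exists>t. vsat E cV (m t) x" for x
  proof -
    have "s x = 0 \<or> \<not> vsat E cV (m (s x - 1)) x"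
    proof (cases "s x = 0")
      case False
      then have "s x - 1 < s x" by simp
      then show ?thesis using sle[where x=x and t="s x - 1"] by linarith
    qed simp
    then show ?thesis unfolding becomes_sat_def using sv[OF that] by blast
  qed
  have key: "s v < s u" if uv: "(u, v) \<in> dep_graph V E cV cE - Id" for u v
  proof (rule ccontr)
    assume "\<not> s v < s u"
    then have le: "s u \<le> s v" by simp
    from uv have neq: "u \<noteq> v" and uV: "u \<in> V" and vV: "v \<in> V" unfolding dep_graph_def by auto
    from uv obtain k where r: "removed_at V E cV cE {v, u} k" and svk: "vsat E cV (m (Suc k)) v"
      unfolding dep_graph_def by auto
    have e: "{v, u} \<in> W k" using r unfolding removed_at_def by blast
    have hv: "\<exists>t. vsat E cV (m t) v" using svk by blast
    have hu: "\<exists>t. vsat E cV (m t) u"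
    proof (rule ccontr)
      assume "\<not> ?thesis"
      then have "s u = Suc K" unfolding s_def by simp
      then show False using le sK[OF hv] by simp
    qed
    have svs: "s v \<le> Suc k" using sle[OF svk] .
    show False
    proof (cases "s u = s v")
      case True
      then show False using sb[OF hu] sb[OF hv] nosim neq uV vV unfolding no_simultaneous_saturation_def by metis
    next
      case False
      then have "s u \<le> k" using le svs by simp
      then have "vsat E cV (m k) u" using sat_mono[OF uV sv[OF hu]] by blast
      then have k0: "k = 0" using sat_filter[OF e] by blast
      then have "m (Suc 0) = m 0" using zero_delta[OF e _ \<open>vsat E cV (m k) u\<close>] by simp
      then have "vsat E cV (m 0) v" using svk k0 by simp
      then have "s v = 0" using sle by fastforce
      then show False using False le by simp
    qed
  qed
  have "(a, b) \<in> (dep_graph V E cV cE - Id)\<^sup>+ \<Longrightarrow> s b < s a" for a b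
  proof (induction rule: trancl_induct)
    case (base y) then show ?case using key by blast
  next
    case (step y z) then show ?case using key[of y z] by simp
  qed
  then show ?thesis unfolding acyclic_def by blast
qed

end

theorem lemma20:
  fixes V :: "'v set" and E :: "'v set set" and cV :: "'v \<Rightarrow> real" and cE :: "'v set \<Rightarrow> real"
  assumes G: "is_cgraph V E cV cE"
    and nosim: "no_simultaneous_saturation V E cV cE"
  defines "\<mu> \<equiv> rising_tide V E cV cE"
    and "D \<equiv> dep_graph V E cV cE"
  shows
    "(\<forall>e1\<in>E. \<forall>e2\<in>E. \<forall>k1 k2. removed_at V E cV cE e1 k1 \<and> removed_at V E cV cE e2 k2 \<and> k1 < k2
        \<longrightarrow> \<mu> e1 < \<mu> e2)
   \<and> (\<forall>u\<in>V. \<forall>a b. (a, u) \<in> D \<and> (b, u) \<in> D \<longrightarrow> \<mu> {a, u} = \<mu> {b, u})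
   \<and> (\<forall>u v w. (u, v) \<in> D \<and> {v, w} \<in> E \<longrightarrow> \<mu> {v, w} \<le> \<mu> {u, v})
   \<and> (\<forall>(x :: nat \<Rightarrow> 'v) n. (\<forall>i<n. (x i, x (Suc i)) \<in> D) \<longrightarrow>
        (\<forall>i j. i \<le> j \<and> j < n \<longrightarrow> \<mu> {x j, x (Suc j)} \<le> \<mu> {x i, x (Suc i)}))
   \<and> acyclic (D - Id)"
proof -
  interpret rtl V E cV cE using G by unfold_locales
  have muK: "\<mu> = rt_mu V E cV cE K" unfolding \<mu>_def rising_tide_def K_def ..
  have p3: "\<forall>u v w. (u, v) \<in> D \<and> {v, w} \<in> E \<longrightarrow> \<mu> {v, w} \<le> \<mu> {u, v}"
    using part3 unfolding muK D_def by blast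
  have p1: "\<forall>e1\<in>E. \<forall>e2\<in>E. \<forall>k1 k2. removed_at V E cV cE e1 k1 \<and> removed_at V E cV cE e2 k2 \<and> k1 < k2
        \<longrightarrow> \<mu> e1 < \<mu> e2" using part1 unfolding muK by blast
  have p2: "\<forall>u\<in>V. \<forall>a b. (a, u) \<in> D \<and> (b, u) \<in> D \<longrightarrow> \<mu> {a, u} = \<mu> {b, u}"
  proof (intro ballI allI impI)
    fix u a b assume h: "(a, u) \<in> D \<and> (b, u) \<in> D"
    have "{u, b} \<in> E" "{u, a} \<in> E" using h Dedge unfolding D_def by (auto simp: insert_commute)
    then have "\<mu> {u, b} \<le> \<mu> {a, u}" "\<mu> {u, a} \<le> \<mu> {b, u}" using p3 h by blast+
    then show "\<mu> {a, u} = \<mu> {b, u}" by (simp add: insert_commute)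
  qed
  have p4: "\<forall>(x :: nat \<Rightarrow> 'v) n. (\<forall>i<n. (x i, x (Suc i)) \<in> D) \<longrightarrow>
        (\<forall>i j. i \<le> j \<and> j < n \<longrightarrow> \<mu> {x j, x (Suc j)} \<le> \<mu> {x i, x (Suc i)})"
  proof (intro allI impI, elim conjE)
    fix x :: "nat \<Rightarrow> 'v" and n i j
    assume H: "\<forall>i<n. (x i, x (Suc i)) \<in> D" and ij: "i \<le> j" and jn: "j < n"
    from ij jn show "\<mu> {x j, x (Suc j)} \<le> \<mu> {x i, x (Suc i)}"
    proof (induction j rule: dec_induct)
      case base then show ?case by simp
    next
      case (step j)
      have "(x j, x (Suc j)) \<in> D" using H step by simp
      moreover have "{x (Suc j), x (Suc (Suc j))} \<in> E" using H step Dedge unfolding D_def by blast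
      ultimately have "\<mu> {x (Suc j), x (Suc (Suc j))} \<le> \<mu> {x j, x (Suc j)}" using p3 by blast
      then show ?case using step by simp
    qed
  qed
  have p5: "acyclic (D - Id)" unfolding D_def using part5[OF nosim] .
  show ?thesis using p1 p2 p3 p4 p5 by blast
qed

end
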